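(* Let $\mathcal{R}=\{P_1,\dots,P_n\}$ be a set of $n$ pairwise disjoint, connected, $\alpha$-fat simple polygons in the plane, and let $T^*$ be an optimal (minimum-length) tour of $\mathcal{R}$. Then $T^*$ is a simple polygon having at most $n$ vertices.
   Context: A region $P$ is $\alpha$-fat (for a fixed constant $\alpha>0$) if $\mathrm{area}(P)\ge \alpha\,[\mathrm{diam}(P)]^2$. A tour of $\mathcal{R}$ is a closed curve in the plane that intersects (visits) every region $P_i$; its length is its Euclidean length. An optimal tour is a tour of minimum length among all tours of $\mathcal{R}$ (the TSP with neighborhoods). *)

theory Defs
  imports "HOL-Analysis.Analysis"
begin

fun polypath :: "(real^2) list \<Rightarrow> real \<Rightarrow> real^2" where
  "polypath [] = linepath 0 0"
| "polypath [a] = linepath a a"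
| "polypath [a, b] = linepath a b"
| "polypath (a # b # c # xs) = linepath a b +++ polypath (b # c # xs)"

definition closed_polypath :: "(real^2) list \<Rightarrow> real \<Rightarrow> real^2" where
  "closed_polypath vs = polypath (vs @ [hd vs])"

definition simple_polygon_curve :: "(real^2) list \<Rightarrow> bool" where
  "simple_polygon_curve vs \<longleftrightarrow> length vs \<ge> 3 \<and> simple_path (closed_polypath vs)"

definition simple_polygon :: "(real^2) set \<Rightarrow> bool" where
  "simple_polygon P \<longleftrightarrow> (\<exists>vs. simple_polygon_curve vs \<and>
      P = path_image (closed_polypath vs) \<union> inside (path_image (closed_polypath vs)))"

definition fat :: "real \<Rightarrow> (real^2) set \<Rightarrow> bool" where
  "fat \<alpha> P \<longleftrightarrow> measure lebesgue P \<ge> \<alpha> * (diameter P)\<^sup>2"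

definition curve_length :: "(real \<Rightarrow> real^2) \<Rightarrow> ereal" where
  "curve_length g = (SUP ts \<in> {ts. sorted ts \<and> ts \<noteq> [] \<and> hd ts = 0 \<and> last ts = 1}.
      ereal (\<Sum>i < length ts - 1. dist (g (ts ! i)) (g (ts ! Suc i))))"

definition is_tour :: "nat \<Rightarrow> (nat \<Rightarrow> (real^2) set) \<Rightarrow> (real \<Rightarrow> real^2) \<Rightarrow> bool" where
  "is_tour n P g \<longleftrightarrow> path g \<and> pathfinish g = pathstart g \<and>
      (\<forall>i<n. path_image g \<inter> P i \<noteq> {})"

definition optimal_tour :: "nat \<Rightarrow> (nat \<Rightarrow> (real^2) set) \<Rightarrow> (real \<Rightarrow> real^2) \<Rightarrow> bool" where
  "optimal_tour n P g \<longleftrightarrow> is_tour n P g \<and>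
      (\<forall>h. is_tour n P h \<longrightarrow> curve_length g \<le> curve_length h)"

end

theory Submission
  imports Defs
begin


fun osum :: "(real^2) list \<Rightarrow> real" where
  "osum (a # b # xs) = dist a b + osum (b # xs)"
| "osum _ = 0"

definition cper :: "(real^2) list \<Rightarrow> real" where
  "cper xs = osum (xs @ [hd xs])"

lemma osum_nonneg: "osum xs \<ge> 0"
  by (induction xs rule: osum.induct) auto

lemma osum_Cons: "xs \<noteq> [] \<Longrightarrow> osum (a # xs) = dist a (hd xs) + osum xs"
  by (cases xs) auto

lemma osum_append: "xs \<noteq> [] \<Longrightarrow> ys \<noteq> [] \<Longrightarrow>
   osum (xs @ ys) = osum xs + dist (last xs) (hd ys) + osum ys"
proof (induction xs rule: osum.induct)
  case (1 a b xs)
  then show ?case by (cases xs) (auto simp: osum_Cons)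
next
  case ("2_2" v)
  then show ?case by (auto simp: osum_Cons)
qed auto

lemma osum_snoc: "xs \<noteq> [] \<Longrightarrow> osum (xs @ [p]) = osum xs + dist (last xs) p"
  using osum_append[of xs "[p]"] by simp

lemma osum_rev: "osum (rev xs) = osum xs"
proof (induction xs rule: osum.induct)
  case (1 a b xs)
  have "osum (rev xs @ [b, a]) = osum (rev xs @ [b]) + dist b a"
    using osum_snoc[of "rev xs @ [b]" a] by simp
  then show ?case using 1 by (simp add: dist_commute)
qed auto

lemma cper_alt: "xs \<noteq> [] \<Longrightarrow> cper xs = osum xs + dist (last xs) (hd xs)"
  by (simp add: cper_def osum_snoc)

lemma cper_rotate: "cper (xs @ ys) = cper (ys @ xs)"
proof (cases "xs = [] \<or> ys = []")
  case True then show ?thesis by auto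
next
  case False
  then show ?thesis
    by (simp add: cper_alt osum_append dist_commute)
qed

lemma cper_rev: "cper (rev xs) = cper xs"
proof (cases "xs = []")
  case False
  have "cper (rev xs) = osum (rev xs) + dist (hd xs) (last xs)"
    using False by (simp add: cper_alt hd_rev last_rev)
  then show ?thesis using False by (simp add: cper_alt osum_rev dist_commute)
qed simp

lemma osum_dup: "osum (xs @ a # a # ys) = osum (xs @ a # ys)"
  by (induction xs rule: osum.induct) auto

lemma cper_dup: "cper (xs @ a # a # ys) = cper (xs @ a # ys)"
proof -
  have "hd (xs @ a # a # ys) = hd (xs @ a # ys)" by (cases xs) auto
  then show ?thesis unfolding cper_def using osum_dup[of xs a "ys @ [hd (xs @ a # ys)]"] by simp
qed

lemma cper_W: "A \<noteq> [] \<Longrightarrow> B \<noteq> [] \<Longrightarrow> cper (z # A @ z # B) =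
   dist z (hd A) + osum A + dist (last A) z + dist z (hd B) + osum B + dist (last B) z"
  by (simp add: cper_alt osum_append osum_Cons)

definition Good :: "(real^2) set \<Rightarrow> real^2 \<Rightarrow> (real^2) list \<Rightarrow> (real^2) list \<Rightarrow> bool" where
  "Good Q z A B \<longleftrightarrow> (\<exists>x\<in>set A. x \<noteq> z) \<and> (\<exists>x\<in>set B. x \<noteq> z) \<and> Q \<subseteq> set (z # A @ z # B) \<and>
     (\<forall>r. Q \<subseteq> set r \<longrightarrow> cper (z # A @ z # B) \<le> cper r)"

lemma Good_ne: "Good Q z A B \<Longrightarrow> A \<noteq> [] \<and> B \<noteq> []"
  unfolding Good_def by auto

lemma seg_of_dist: "dist a z + dist z b \<le> dist a (b::real^2) \<Longrightarrow> z \<in> closed_segment a b"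
  by (metis antisym between between_mem_segment dist_triangle)

lemma Good_opt: "Good Q z A B \<Longrightarrow> set r = set (z # A @ z # B) \<Longrightarrow> cper (z # A @ z # B) \<le> cper r"
  unfolding Good_def by metis

lemma Good_O1: assumes "Good Q z A B" shows "z \<in> closed_segment (last B) (hd A)"
proof -
  from assms have ne: "A \<noteq> []" "B \<noteq> []" by (auto dest: Good_ne)
  have "cper (z # A @ z # B) \<le> cper (A @ z # B)"
    by (rule Good_opt[OF assms]) auto
  then show ?thesis using ne
    by (intro seg_of_dist) (simp add: cper_W cper_alt osum_append osum_Cons dist_commute)
qed

lemma Good_O2: assumes "Good Q z A B" shows "z \<in> closed_segment (last B) (last A)"
proof -
  from assms have ne: "A \<noteq> []" "B \<noteq> []" by (auto dest: Good_ne)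
  have "cper (z # A @ z # B) \<le> cper (z # B @ rev A)"
    by (rule Good_opt[OF assms]) auto
  then show ?thesis using ne
    by (intro seg_of_dist) (simp add: cper_W cper_alt osum_append osum_Cons dist_commute osum_rev hd_rev last_rev)
qed

lemma Good_O3: assumes "Good Q z A B" shows "z \<in> closed_segment (hd A) (hd B)"
proof -
  from assms have ne: "A \<noteq> []" "B \<noteq> []" by (auto dest: Good_ne)
  have "cper (z # A @ z # B) \<le> cper (z # rev A @ B)"
    by (rule Good_opt[OF assms]) auto
  then show ?thesis using ne
    by (intro seg_of_dist) (simp add: cper_W cper_alt osum_append osum_Cons dist_commute osum_rev hd_rev last_rev)
qed

lemma Good_O4: assumes "Good Q z A B" shows "z \<in> closed_segment (last A) (hd B)"
proof -
  from assms have ne: "A \<noteq> []" "B \<noteq> []" by (auto dest: Good_ne)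
  have "cper (z # A @ z # B) \<le> cper (z # A @ B)"
    by (rule Good_opt[OF assms]) auto
  then show ?thesis using ne
    by (intro seg_of_dist) (simp add: cper_W cper_alt osum_append osum_Cons dist_commute)
qed


lemma Good_transfer:
  "Good Q z A B \<Longrightarrow> (\<exists>x\<in>set A'. x \<noteq> z') \<Longrightarrow> (\<exists>x\<in>set B'. x \<noteq> z') \<Longrightarrow>
   set (z' # A' @ z' # B') = set (z # A @ z # B) \<Longrightarrow> cper (z' # A' @ z' # B') = cper (z # A @ z # B) \<Longrightarrow>
   Good Q z' A' B'"
proof -
  assume a: "Good Q z A B" "\<exists>x\<in>set A'. x \<noteq> z'" "\<exists>x\<in>set B'. x \<noteq> z'"
    "set (z' # A' @ z' # B') = set (z # A @ z # B)" "cper (z' # A' @ z' # B') = cper (z # A @ z # B)"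
  from a(1) have q: "Q \<subseteq> set (z # A @ z # B)" and o: "\<forall>r. Q \<subseteq> set r \<longrightarrow> cper (z # A @ z # B) \<le> cper r"
    unfolding Good_def by blast+
  show ?thesis unfolding Good_def a(4) a(5) using a(2,3) q o by blast
qed

lemma Good_rev: assumes "Good Q z A B" shows "Good Q z (rev A) (rev B)"
proof (rule Good_transfer[OF assms])
  show "cper (z # rev A @ z # rev B) = cper (z # A @ z # B)"
  proof -
    have "cper (z # rev A @ z # rev B) = cper (rev B @ (z # rev A @ [z]))"
      using cper_rotate[of "z # rev A @ [z]" "rev B"] by simp
    also have "\<dots> = cper (rev (z # A @ z # B))" by simp
    finally show ?thesis by (simp only: cper_rev)
  qed
qed (use assms in \<open>auto simp: Good_def\<close>)

lemma Good_swap: assumes "Good Q z A B" shows "Good Q z B A"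
proof (rule Good_transfer[OF assms])
  show "cper (z # B @ z # A) = cper (z # A @ z # B)"
    using cper_rotate[of "z # A" "z # B"] by simp
qed (use assms in \<open>auto simp: Good_def\<close>)

lemma seg_collinear: "z \<in> closed_segment a b \<Longrightarrow> collinear {a, b, z}"
  by (rule collinear_subset[OF collinear_closed_segment[of a b]]) auto

lemma collinear_add:
  assumes "collinear S" "a \<in> S" "b \<in> S" "a \<noteq> b" "collinear {a, b, c}"
  shows "collinear (insert c S)"
proof -
  have "collinear (insert a (insert b (insert c S)))"
  proof (subst collinear_triples[OF assms(4)], intro ballI)
    fix x assume "x \<in> insert c S"
    then show "collinear {a, b, x}"
    proof
      assume "x = c" then show ?thesis using assms(5) by simp
    next
      assume "x \<in> S" then show ?thesis using assms(1-3) by (intro collinear_subset[OF assms(1)]) auto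
    qed
  qed
  moreover have "insert a (insert b (insert c S)) = insert c S" using assms(2,3) by auto
  ultimately show ?thesis by simp
qed

lemma ray_cases:
  fixes a b c z :: "real^2"
  assumes "b \<noteq> z" "a \<noteq> z" "c \<noteq> z" "z \<in> closed_segment b a" "z \<in> closed_segment b c"
  shows "a \<in> closed_segment z c \<or> c \<in> closed_segment z a"
proof -
  obtain u where u: "0 \<le> u" "u \<le> 1" "z = (1 - u) *\<^sub>R b + u *\<^sub>R a"
    using assms(4) by (auto simp: in_segment)
  obtain v where v: "0 \<le> v" "v \<le> 1" "z = (1 - v) *\<^sub>R b + v *\<^sub>R c"
    using assms(5) by (auto simp: in_segment)
  have "u \<noteq> 0" using u assms(1) by auto
  have "u \<noteq> 1" using u assms(2) by auto
  have "v \<noteq> 0" using v assms(1) by auto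
  have "v \<noteq> 1" using v assms(3) by auto
  define al where "al = (1 - u) / u"
  define be where "be = (1 - v) / v"
  have al: "al > 0" using u \<open>u \<noteq> 0\<close> \<open>u \<noteq> 1\<close> by (simp add: al_def)
  have be: "be > 0" using v \<open>v \<noteq> 0\<close> \<open>v \<noteq> 1\<close> by (simp add: be_def)
  have e1: "u *\<^sub>R (a - z) = (1 - u) *\<^sub>R (z - b)" using u(3) by (simp add: algebra_simps)
  have "a - z = (1/u) *\<^sub>R (u *\<^sub>R (a - z))" using \<open>u \<noteq> 0\<close> by simp
  also have "\<dots> = al *\<^sub>R (z - b)" unfolding e1 al_def by simp
  finally have ha: "a = z + al *\<^sub>R (z - b)" by (simp add: algebra_simps)
  have e2: "v *\<^sub>R (c - z) = (1 - v) *\<^sub>R (z - b)" using v(3) by (simp add: algebra_simps)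
  have "c - z = (1/v) *\<^sub>R (v *\<^sub>R (c - z))" using \<open>v \<noteq> 0\<close> by simp
  also have "\<dots> = be *\<^sub>R (z - b)" unfolding e2 be_def by simp
  finally have hc: "c = z + be *\<^sub>R (z - b)" by (simp add: algebra_simps)
  show ?thesis
  proof (cases "al \<le> be")
    case True
    have "(al/be) *\<^sub>R (c - z) = al *\<^sub>R (z - b)" using hc be by simp
    then have "a = z + (al/be) *\<^sub>R (c - z)" using ha by simp
    then have "a = (1 - al/be) *\<^sub>R z + (al/be) *\<^sub>R c" by (simp add: algebra_simps)
    then have "a \<in> closed_segment z c" using True al be
      unfolding in_segment by (intro conjI exI[of _ "al/be"]) (auto simp: divide_simps)
    then show ?thesis by simp
  next
    case False
    have "(be/al) *\<^sub>R (a - z) = be *\<^sub>R (z - b)" using ha al by simp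
    then have "c = z + (be/al) *\<^sub>R (a - z)" using hc by simp
    then have "c = (1 - be/al) *\<^sub>R z + (be/al) *\<^sub>R a" by (simp add: algebra_simps)
    then have "c \<in> closed_segment z a" using False al be
      unfolding in_segment by (intro conjI exI[of _ "be/al"]) (auto simp: divide_simps)
    then show ?thesis by simp
  qed
qed




lemma front_cases:
  assumes G: "Good Q z A B"
    and IH: "\<And>z' A' B'. length A' < length A \<Longrightarrow> Good Q z' A' B' \<Longrightarrow> collinear (insert z' (set A'))"
    and c: "hd A = z \<or> (length A \<ge> 2 \<and> hd A = hd (tl A))"
  shows "collinear (insert z (set A))"
proof -
  have ne: "A \<noteq> []" using Good_ne[OF G] by simp
  then obtain a A1 where A: "A = a # A1" by (cases A) auto
  show ?thesis
  proof (cases "a = z")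
    case True
    have "Good Q z A1 B"
    proof (rule Good_transfer[OF G])
      show "\<exists>x\<in>set A1. x \<noteq> z" using G True A unfolding Good_def by auto
      show "\<exists>x\<in>set B. x \<noteq> z" using G unfolding Good_def by auto
      show "set (z # A1 @ z # B) = set (z # A @ z # B)" using A True by auto
      show "cper (z # A1 @ z # B) = cper (z # A @ z # B)"
        using A True cper_dup[of "[]" z "A1 @ z # B"] by simp
    qed
    from IH[OF _ this] have "collinear (insert z (set A1))" using A by simp
    then show ?thesis using A True by simp
  next
    case False
    with c A obtain A2 where A2: "A1 = a # A2" by (cases A1) auto
    have "Good Q z (a # A2) B"
    proof (rule Good_transfer[OF G])
      show "\<exists>x\<in>set (a # A2). x \<noteq> z" using G A A2 unfolding Good_def by auto
      show "\<exists>x\<in>set B. x \<noteq> z" using G unfolding Good_def by auto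
      show "set (z # (a # A2) @ z # B) = set (z # A @ z # B)" using A A2 by auto
      show "cper (z # (a # A2) @ z # B) = cper (z # A @ z # B)"
        using A A2 cper_dup[of "[z]" a "A2 @ z # B"] by simp
    qed
    from IH[OF _ this] have "collinear (insert z (set (a # A2)))" using A A2 by simp
    then show ?thesis using A A2 by simp
  qed
qed

lemma peel:
  assumes G: "Good Q z A B"
    and IH: "\<And>z' A' B'. length A' < length A \<Longrightarrow> Good Q z' A' B' \<Longrightarrow> collinear (insert z' (set A'))"
    and len: "length A \<ge> 2" and d1: "hd (tl A) \<noteq> hd A" and d2: "hd A \<noteq> z"
    and sg: "hd A \<in> closed_segment z (last A)"
  shows "collinear (insert z (set A))"
proof -
  obtain a1 A1 where A: "A = a1 # A1" using len by (cases A) auto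
  have A1: "A1 \<noteq> []" using len A by auto
  have B: "B \<noteq> []" using Good_ne[OF G] by simp
  have dd: "dist z (last A) = dist z a1 + dist a1 (last A)"
    using sg A by (simp add: between_mem_segment[symmetric] between)
  have G': "Good Q a1 A1 (z # B @ [z])"
  proof (rule Good_transfer[OF G])
    show "\<exists>x\<in>set A1. x \<noteq> a1" using d1 A A1 by (cases A1) auto
    show "\<exists>x\<in>set (z # B @ [z]). x \<noteq> a1" using d2 A by auto
    show "set (a1 # A1 @ a1 # z # B @ [z]) = set (z # A @ z # B)" using A by auto
    have o: "osum (z # B @ [z]) = dist z (hd B) + osum B + dist (last B) z"
      using B by (simp add: osum_Cons osum_snoc)
    show "cper (a1 # A1 @ a1 # z # B @ [z]) = cper (z # A @ z # B)"
    proof -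
      have e1: "cper (a1 # A1 @ a1 # (z # B @ [z])) = dist a1 (hd A1) + osum A1 + dist (last A1) a1
          + dist a1 z + osum (z # B @ [z]) + dist z a1"
        using cper_W[of A1 "z # B @ [z]" a1] A1 by simp
      have e2: "cper (z # A @ z # B) = dist z a1 + (dist a1 (hd A1) + osum A1) + dist (last A1) z
          + dist z (hd B) + osum B + dist (last B) z"
        using cper_W[of A B z] A A1 B by (simp add: osum_Cons)
      have "dist (last A1) z = dist z a1 + dist a1 (last A1)" using dd A A1 by (simp add: dist_commute)
      then show ?thesis using e1 e2 o by (simp add: dist_commute)
    qed
  qed
  have c1: "collinear (insert a1 (set A1))" using IH[OF _ G'] A by simp
  have "a1 \<in> closed_segment z (hd A1)"
    using Good_O1[OF G'] by simp
  then have c2: "collinear {a1, hd A1, z}"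
    using seg_collinear by (metis insert_commute)
  have "collinear (insert z (insert a1 (set A1)))"
    by (rule collinear_add[OF c1 _ _ _ c2]) (use A1 d1 A in auto)
  then show ?thesis using A by simp
qed

lemma main_step:
  assumes IH: "\<And>z' A' B'. length A' < length A \<Longrightarrow> Good Q z' A' B' \<Longrightarrow> collinear (insert z' (set A'))"
  shows "Good Q z A B \<Longrightarrow> collinear (insert z (set A))"
proof (induction "length B" arbitrary: B rule: less_induct)
  case (less B)
  note G = less.prems
  have ne: "A \<noteq> []" "B \<noteq> []" using Good_ne[OF G] by auto
  have GR: "Good Q z (rev A) (rev B)" using Good_rev[OF G] .
  have IHR: "\<And>z' A' B'. length A' < length (rev A) \<Longrightarrow> Good Q z' A' B' \<Longrightarrow> collinear (insert z' (set A'))"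
    using IH by simp
  show ?case
  proof (cases "length A = 1")
    case True
    then obtain a where "A = [a]" by (cases A) (auto simp: length_Suc_conv)
    then show ?thesis by simp
  next
    case False
    have "length A \<noteq> 0" using ne by simp
    with False have len: "length A \<ge> 2" by arith
    show ?thesis
    proof (cases "hd A = z \<or> (length A \<ge> 2 \<and> hd A = hd (tl A))")
      case True
      show ?thesis
      proof (rule front_cases[OF G])
        fix z' A' B' assume "length A' < length A" "Good Q z' A' B'"
        then show "collinear (insert z' (set A'))" by (rule IH)
      qed (rule True)
    next
      case F1: False
      show ?thesis
      proof (cases "hd (rev A) = z \<or> (length (rev A) \<ge> 2 \<and> hd (rev A) = hd (tl (rev A)))")
        case True
        have "collinear (insert z (set (rev A)))"
        proof (rule front_cases[OF GR])
          fix z' A' B' assume "length A' < length (rev A)" "Good Q z' A' B'"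
          then show "collinear (insert z' (set A'))" by (rule IHR)
        qed (rule True)
        then show ?thesis by simp
      next
        case F2: False
        have lastA: "last A \<noteq> z" using F2 ne by (simp add: hd_rev)
        show ?thesis
        proof (cases "hd B = z \<and> last B = z")
          case True
          then obtain B1 where B: "B = z # B1" using ne by (cases B) auto
          have "B1 \<noteq> []" using G B unfolding Good_def by auto
          have "Good Q z A B1"
          proof (rule Good_transfer[OF G])
            show "\<exists>x\<in>set A. x \<noteq> z" using G unfolding Good_def by auto
            show "\<exists>x\<in>set B1. x \<noteq> z" using G B unfolding Good_def by auto
            show "set (z # A @ z # B1) = set (z # A @ z # B)" using B by auto
            show "cper (z # A @ z # B1) = cper (z # A @ z # B)"
              using B cper_dup[of "z # A" z B1] by simp
          qed
          then show ?thesis using less.hyps[of B1] B by simp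
        next
          case F3: False
          have dir: "hd A \<in> closed_segment z (last A) \<or> last A \<in> closed_segment z (hd A)"
          proof (cases "last B = z")
            case False
            show ?thesis
              by (rule ray_cases[OF False]) (use F1 lastA Good_O1[OF G] Good_O2[OF G] in auto)
          next
            case True
            with F3 have hB: "hd B \<noteq> z" by simp
            show ?thesis
              by (rule ray_cases[OF hB])
                 (use F1 lastA Good_O3[OF G] Good_O4[OF G] in \<open>auto simp: closed_segment_commute\<close>)
          qed
          then show ?thesis
          proof
            assume sg: "hd A \<in> closed_segment z (last A)"
            show ?thesis
            proof (rule peel[OF G _ len _ _ sg])
              fix z' A' B' assume "length A' < length A" "Good Q z' A' B'"
              then show "collinear (insert z' (set A'))" by (rule IH)
            qed (use F1 len in auto)
          next
            assume sg: "last A \<in> closed_segment z (hd A)"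
            have "collinear (insert z (set (rev A)))"
            proof (rule peel[OF GR])
              fix z' A' B' assume "length A' < length (rev A)" "Good Q z' A' B'"
              then show "collinear (insert z' (set A'))" by (rule IHR)
            qed (use F2 len sg ne in \<open>auto simp: hd_rev last_rev\<close>)
            then show ?thesis by simp
          qed
        qed
      qed
    qed
  qed
qed

lemma main_lemma: "Good Q z A B \<Longrightarrow> collinear (insert z (set A))"
proof (induction "length A" arbitrary: z A B rule: less_induct)
  case less
  show ?case by (rule main_step[OF less.hyps less.prems]) auto
qed




lemma collinear_union:
  assumes "collinear S" "collinear T" "a \<in> S" "a \<in> T" "b \<in> S" "b \<in> T" "a \<noteq> b"
  shows "collinear (S \<union> T)"
proof -
  have "collinear (insert a (insert b (S \<union> T)))"
  proof (subst collinear_triples[OF assms(7)], intro ballI)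
    fix x assume "x \<in> S \<union> T"
    then show "collinear {a, b, x}"
    proof
      assume "x \<in> S" then show ?thesis using assms by (intro collinear_subset[OF assms(1)]) auto
    next
      assume "x \<in> T" then show ?thesis using assms by (intro collinear_subset[OF assms(2)]) auto
    qed
  qed
  moreover have "insert a (insert b (S \<union> T)) = S \<union> T" using assms by auto
  ultimately show ?thesis by simp
qed

lemma Good_collinear: "Good Q z A B \<Longrightarrow> collinear (set (z # A @ z # B))"
proof (induction "length A + length B" arbitrary: A B rule: less_induct)
  case less
  note G = less.prems
  have ne: "A \<noteq> []" "B \<noteq> []" using Good_ne[OF G] by auto
  show ?case
  proof (cases "hd A = z")
    case True
    then obtain A1 where A: "A = z # A1" using ne by (cases A) auto
    have G1: "Good Q z A1 B"
    proof (rule Good_transfer[OF G])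
      show "\<exists>x\<in>set A1. x \<noteq> z" using G A unfolding Good_def by auto
      show "\<exists>x\<in>set B. x \<noteq> z" using G unfolding Good_def by auto
      show "set (z # A1 @ z # B) = set (z # A @ z # B)" using A by auto
      show "cper (z # A1 @ z # B) = cper (z # A @ z # B)"
        using A cper_dup[of "[]" z "A1 @ z # B"] by simp
    qed
    have "collinear (set (z # A1 @ z # B))" using less.hyps[OF _ G1] A by simp
    then show ?thesis using A by simp
  next
    case F1: False
    show ?thesis
    proof (cases "hd B = z")
      case True
      then obtain B1 where B: "B = z # B1" using ne by (cases B) auto
      have G1: "Good Q z A B1"
      proof (rule Good_transfer[OF G])
        show "\<exists>x\<in>set A. x \<noteq> z" using G unfolding Good_def by auto
        show "\<exists>x\<in>set B1. x \<noteq> z" using G B unfolding Good_def by auto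
        show "set (z # A @ z # B1) = set (z # A @ z # B)" using B by auto
        show "cper (z # A @ z # B1) = cper (z # A @ z # B)"
          using B cper_dup[of "z # A" z B1] by simp
      qed
      have "collinear (set (z # A @ z # B1))" using less.hyps[OF _ G1] B by simp
      then show ?thesis using B by simp
    next
      case F2: False
      have c1: "collinear (insert z (set A))" by (rule main_lemma[OF G])
      have c2: "collinear (insert z (set B))" by (rule main_lemma[OF Good_swap[OF G]])
      have c3: "collinear {hd A, hd B, z}" using seg_collinear[OF Good_O3[OF G]] .
      have c4: "collinear (insert (hd B) (insert z (set A)))"
        by (rule collinear_add[OF c1, of z "hd A"]) (use ne F1 c3 in \<open>auto simp: insert_commute\<close>)
      have "collinear (insert (hd B) (insert z (set A)) \<union> insert z (set B))"
        by (rule collinear_union[OF c4 c2, of z "hd B"]) (use ne F2 in auto)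
      moreover have "insert (hd B) (insert z (set A)) \<union> insert z (set B) = set (z # A @ z # B)"
        using ne by auto
      ultimately show ?thesis by simp
    qed
  qed
qed




definition SB :: "(real \<Rightarrow> real^2) \<Rightarrow> real \<Rightarrow> bool" where
  "SB g c \<longleftrightarrow> (\<forall>ts. sorted ts \<longrightarrow> set ts \<subseteq> {0..1} \<longrightarrow> osum (map g ts) \<le> c)"

lemma dist_linepath: "dist (linepath a b s) (linepath a b t) = \<bar>t - s\<bar> * dist a (b::real^2)"
proof -
  have "linepath a b s - linepath a b t = (s - t) *\<^sub>R (b - a)"
    by (simp add: linepath_def scaleR_diff_left scaleR_diff_right algebra_simps)
  then show ?thesis by (simp add: dist_norm norm_minus_commute abs_minus_commute)
qed

lemma osum_linepath: "sorted (t # ts) \<Longrightarrow> osum (map (linepath a b) (t # ts)) \<le> (last (t # ts) - t) * dist a b"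
proof (induction ts arbitrary: t)
  case Nil then show ?case by simp
next
  case (Cons t' ts)
  have "osum (map (linepath a b) (t' # ts)) \<le> (last (t' # ts) - t') * dist a b"
    using Cons by simp
  moreover have "t \<le> t'" using Cons.prems by simp
  ultimately show ?case by (simp add: dist_linepath algebra_simps)
qed

lemma SB_linepath: "SB (linepath a b) (dist a b)"
  unfolding SB_def
proof (intro allI impI)
  fix ts :: "real list" assume s: "sorted ts" "set ts \<subseteq> {0..1}"
  show "osum (map (linepath a b) ts) \<le> dist a b"
  proof (cases ts)
    case Nil then show ?thesis by simp
  next
    case (Cons t ts')
    have "last ts \<in> {0..1}" "t \<in> {0..1}" using s Cons last_in_set[of ts] by auto
    then have "(last ts - t) * dist a b \<le> 1 * dist a b"
      by (intro mult_right_mono) auto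
    then show ?thesis using osum_linepath[of t ts' a b] s Cons by simp
  qed
qed

lemma sorted_split: "sorted ts \<Longrightarrow> ts = filter (\<lambda>t. t \<le> (c::real)) ts @ filter (\<lambda>t. \<not> t \<le> c) ts"
proof (induction ts)
  case (Cons t ts)
  show ?case
  proof (cases "t \<le> c")
    case True then show ?thesis using Cons by simp
  next
    case False
    then have "\<forall>u\<in>set ts. \<not> u \<le> c" using Cons.prems by auto
    then have "filter (\<lambda>t. t \<le> c) ts = []" by (simp add: filter_empty_conv)
    moreover have "filter (\<lambda>t. \<not> t \<le> c) ts = ts" using \<open>\<forall>u\<in>set ts. \<not> u \<le> c\<close> by simp
    ultimately show ?thesis using False by simp
  qed
qed simp

lemma osum_insert: "osum (xs @ ys) \<le> osum (xs @ p # ys)"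
proof (cases "xs = [] \<or> ys = []")
  case True then show ?thesis
  proof
    assume "xs = []" then show ?thesis by (cases ys) (auto simp: osum_Cons)
  next
    assume "ys = []" then show ?thesis by (cases "xs = []") (auto simp: osum_snoc)
  qed
next
  case False
  then show ?thesis
    using dist_triangle[of "last xs" "hd ys" p]
    by (simp add: osum_append osum_Cons)
qed

lemma osum_mid: "osum (xs @ p # ys) = osum (xs @ [p]) + osum (p # ys)"
proof (cases "xs = []")
  case False
  then show ?thesis
    using osum_append[of xs "p # ys"] osum_snoc[of xs p] by simp
qed simp

lemma SB_join:
  assumes "SB g1 c1" "SB g2 c2" "pathfinish g1 = pathstart g2"
  shows "SB (g1 +++ g2) (c1 + c2)"
  unfolding SB_def
proof (intro allI impI)
  fix ts :: "real list" assume s: "sorted ts" "set ts \<subseteq> {0..1}"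
  define ts1 where "ts1 = filter (\<lambda>t. t \<le> 1/2) ts"
  define ts2 where "ts2 = filter (\<lambda>t. \<not> t \<le> 1/2) ts"
  have ts: "ts = ts1 @ ts2" unfolding ts1_def ts2_def by (rule sorted_split[OF s(1)])
  let ?g = "g1 +++ g2"
  have h: "?g (1/2) = g1 1" by (simp add: joinpaths_def)
  have h2: "g1 1 = g2 0" using assms(3) by (simp add: pathfinish_def pathstart_def)
  have m1: "map ?g ts1 @ [?g (1/2)] = map g1 (map (\<lambda>t. 2 * t) ts1 @ [1])"
    using h unfolding ts1_def by (simp add: joinpaths_def)
  have m2: "?g (1/2) # map ?g ts2 = map g2 (0 # map (\<lambda>t. 2 * t - 1) ts2)"
    using h h2 unfolding ts2_def by (simp add: joinpaths_def)
  have s1: "sorted (map (\<lambda>t. 2 * t) ts1 @ [1])" "set (map (\<lambda>t. 2 * t) ts1 @ [1]) \<subseteq> {0..1}"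
    using s unfolding ts1_def
    by (auto simp: sorted_append sorted_map intro: sorted_filter[of id, simplified])
  have s2: "sorted (0 # map (\<lambda>t. 2 * t - 1) ts2)" "set (0 # map (\<lambda>t. 2 * t - 1) ts2) \<subseteq> {0..1}"
    using s unfolding ts2_def
    by (auto simp: sorted_map intro: sorted_filter[of id, simplified])
  have "osum (map ?g ts) \<le> osum (map ?g ts1 @ ?g (1/2) # map ?g ts2)"
    using ts osum_insert by (metis map_append)
  also have "\<dots> = osum (map ?g ts1 @ [?g (1/2)]) + osum (?g (1/2) # map ?g ts2)"
    by (rule osum_mid)
  also have "\<dots> \<le> c1 + c2"
    using assms(1,2) s1 s2 unfolding m1 m2 SB_def by (intro add_mono) blast+
  finally show "osum (map ?g ts) \<le> c1 + c2" .
qed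

lemma polypath_start: "ps \<noteq> [] \<Longrightarrow> pathstart (polypath ps) = hd ps"
  by (induction ps rule: polypath.induct) (auto simp: pathstart_def linepath_def joinpaths_def)

lemma polypath_finish: "ps \<noteq> [] \<Longrightarrow> pathfinish (polypath ps) = last ps"
  by (induction ps rule: polypath.induct) (auto simp: pathfinish_def linepath_def joinpaths_def)

lemma path_polypath: "path (polypath ps)"
proof (induction ps rule: polypath.induct)
  case 1 show ?case by (simp only: polypath.simps path_linepath)
next
  case (2 a) show ?case by (simp only: polypath.simps path_linepath)
qed (auto simp: polypath_start)

lemma SB_polypath: "SB (polypath ps) (osum ps)"
proof (induction ps rule: polypath.induct)
  case 1 have "SB (linepath 0 0) (dist (0::real^2) 0)" by (rule SB_linepath)
  then show ?case by (simp only: polypath.simps osum.simps dist_self)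
next
  case (2 a) have "SB (linepath a a) (dist a a)" by (rule SB_linepath)
  then show ?case by (simp only: polypath.simps osum.simps dist_self)
next
  case (3 a b) then show ?case using SB_linepath[of a b] by simp
next
  case (4 a b c xs)
  then show ?case using SB_join[OF SB_linepath[of a b] 4] by (simp add: polypath_start)
qed

lemma image_polypath: "length ps \<ge> 2 \<Longrightarrow>
  path_image (polypath ps) = (\<Union>i<length ps - 1. closed_segment (ps ! i) (ps ! Suc i))"
proof (induction ps rule: polypath.induct)
  case (3 a b) then show ?case by (simp add: lessThan_Suc)
next
  case (4 a b c xs)
  have "path_image (polypath (a # b # c # xs)) = closed_segment a b \<union> path_image (polypath (b # c # xs))"
    by (simp add: path_image_join polypath_start)
  also have "\<dots> = closed_segment a b \<union> (\<Union>i<length (b # c # xs) - 1. closed_segment ((b # c # xs) ! i) ((b # c # xs) ! Suc i))"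
    using 4 by simp
  also have "\<dots> = (\<Union>i<length (a # b # c # xs) - 1. closed_segment ((a # b # c # xs) ! i) ((a # b # c # xs) ! Suc i))"
    by (simp add: lessThan_Suc_eq_insert_0)
  finally show ?case .
qed auto




fun vt :: "nat \<Rightarrow> nat \<Rightarrow> real" where
  "vt m 0 = 0"
| "vt m (Suc i) = (if m \<le> 2 then 1 else (1 + vt (m - 1) i) / 2)"

lemma vt_bounds: "0 \<le> vt m i \<and> vt m i \<le> 1"
  by (induction m i rule: vt.induct) auto

lemma vt_pos: "vt m (Suc i) > 0"
  using vt_bounds[of "m - 1" i] by auto

lemma vt_step: "m \<ge> 2 \<Longrightarrow> Suc i < m \<Longrightarrow> vt m i < vt m (Suc i)"
proof (induction i arbitrary: m)
  case 0 then show ?case using vt_pos[of m 0] by simp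
next
  case (Suc i)
  then have "m > 2" by simp
  then show ?case using Suc.IH[of "m - 1"] Suc.prems by simp
qed

lemma vt_last: "m \<ge> 2 \<Longrightarrow> vt m (m - 1) = 1"
proof (induction m rule: nat_less_induct)
  case (1 m)
  show ?case
  proof (cases "m = 2")
    case True then show ?thesis by (simp add: numeral_2_eq_2)
  next
    case False
    then have "m > 2" using 1 by simp
    have k: "m - 1 = Suc (m - 2)" using \<open>m > 2\<close> by arith
    have "m - 1 < m" "2 \<le> m - 1" using \<open>m>2\<close> by auto
    then have "vt (m - 1) (m - 1 - 1) = 1" using 1 by blast
    moreover have "m - 1 - 1 = m - 2" by simp
    ultimately show ?thesis using k \<open>m > 2\<close> by simp
  qed
qed

lemma vt_mono_strict: "m \<ge> 2 \<Longrightarrow> i < j \<Longrightarrow> j < m \<Longrightarrow> vt m i < vt m j"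
proof (induction j)
  case 0 then show ?case by simp
next
  case (Suc j)
  show ?case
  proof (cases "i = j")
    case True then show ?thesis using vt_step Suc.prems by simp
  next
    case False
    then have "vt m i < vt m j" using Suc by simp
    also have "\<dots> < vt m (Suc j)" using vt_step Suc.prems by simp
    finally show ?thesis .
  qed
qed

lemma vt_mono: "m \<ge> 2 \<Longrightarrow> i \<le> j \<Longrightarrow> j < m \<Longrightarrow> vt m i \<le> vt m j"
  using vt_mono_strict[of m i j] by (cases "i = j") auto

lemma vt_half: "m > 2 \<Longrightarrow> vt m 1 = 1/2"
  by (simp add: One_nat_def)

lemma polypath_vertex: "length ps \<ge> 2 \<Longrightarrow> i < length ps \<Longrightarrow> polypath ps (vt (length ps) i) = ps ! i"
proof (induction ps arbitrary: i rule: polypath.induct)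
  case (3 a b)
  then show ?case by (cases i) (auto simp: linepath_def)
next
  case (4 a b c xs)
  let ?m = "length (a # b # c # xs)"
  show ?case
  proof (cases i)
    case 0 then show ?thesis by (simp add: joinpaths_def linepath_def)
  next
    case (Suc j)
    show ?thesis
    proof (cases j)
      case 0 then show ?thesis using Suc by (simp add: joinpaths_def linepath_def)
    next
      case (Suc k)
      have pos: "vt (length (b # c # xs)) j > 0" by (simp only: \<open>j = Suc k\<close>) (rule vt_pos)
      have "polypath (b # c # xs) (vt (length (b # c # xs)) j) = (b # c # xs) ! j"
        using 4 \<open>i = Suc j\<close> by simp
      then show ?thesis using \<open>i = Suc j\<close> pos by (simp add: joinpaths_def field_simps)
    qed
  qed
qed auto

lemma polypath_edge:
  assumes "length ps \<ge> 2" "Suc i < length ps" "vt (length ps) i \<le> t" "t \<le> vt (length ps) (Suc i)"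
  shows "polypath ps t = linepath (ps ! i) (ps ! Suc i)
           ((t - vt (length ps) i) / (vt (length ps) (Suc i) - vt (length ps) i))"
  using assms
proof (induction ps arbitrary: i t rule: polypath.induct)
  case (3 a b)
  then show ?case by simp
next
  case (4 a b c xs)
  let ?m = "length (a # b # c # xs)"
  show ?case
  proof (cases i)
    case 0
    then have "t \<le> 1/2" using 4 by simp
    then show ?thesis using 0 by (simp add: joinpaths_def mult.commute)
  next
    case (Suc j)
    let ?m' = "length (b # c # xs)"
    have vi: "vt ?m i = (1 + vt ?m' j) / 2" "vt ?m (Suc i) = (1 + vt ?m' (Suc j)) / 2"
      using Suc by simp_all
    have lt: "vt ?m' j < vt ?m' (Suc j)" using vt_step[of ?m' j] 4(3) Suc by simp
    show ?thesis
    proof (cases "t \<le> 1/2")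
      case True
      then have t: "t = 1/2" "vt ?m' j = 0" using 4(4) vi vt_bounds[of ?m' j] by auto
      have "polypath (a # b # c # xs) (1/2) = b" by (simp add: joinpaths_def linepath_def)
      then have "polypath (a # b # c # xs) t = b" using t(1) by (simp only:)
      moreover have "(a # b # c # xs) ! i = b"
      proof -
        have "j = 0"
        proof (rule ccontr)
          assume "j \<noteq> 0"
          then obtain k where "j = Suc k" by (cases j) auto
          then have "vt ?m' j > 0" by (simp only:) (rule vt_pos)
          with t(2) show False by simp
        qed
        then show ?thesis using Suc by simp
      qed
      moreover have "t = vt ?m i" using t vi by simp
      then have "(t - vt ?m i) / (vt ?m (Suc i) - vt ?m i) = 0" by simp
      ultimately show ?thesis by (simp only: linepath_0')
    next
      case False
      have e: "polypath (a # b # c # xs) t = polypath (b # c # xs) (2 * t - 1)"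
        using False by (simp add: joinpaths_def)
      have "polypath (b # c # xs) (2 * t - 1) = linepath ((b # c # xs) ! j) ((b # c # xs) ! Suc j)
           ((2 * t - 1 - vt ?m' j) / (vt ?m' (Suc j) - vt ?m' j))"
        by (rule 4(1)) (use 4(3-5) vi Suc in auto)
      moreover have "(2 * t - 1 - vt ?m' j) / (vt ?m' (Suc j) - vt ?m' j)
          = (t - vt ?m i) / (vt ?m (Suc i) - vt ?m i)"
        using vi lt by (simp add: field_simps)
      ultimately show ?thesis using e Suc by simp
    qed
  qed
qed auto

lemma polypath_edge_inj:
  assumes "length ps \<ge> 2" "Suc i < length ps" "ps ! i \<noteq> ps ! Suc i"
    and "s \<in> {vt (length ps) i .. vt (length ps) (Suc i)}" "t \<in> {vt (length ps) i .. vt (length ps) (Suc i)}"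
    and "polypath ps s = polypath ps t"
  shows "s = t"
proof -
  let ?a = "vt (length ps) i" and ?b = "vt (length ps) (Suc i)"
  have lt: "?a < ?b" using vt_step assms(1,2) by simp
  have "(s - ?a) / (?b - ?a) \<in> {0..1}" "(t - ?a) / (?b - ?a) \<in> {0..1}"
    using assms(4,5) lt by (auto simp: divide_simps)
  moreover have "linepath (ps ! i) (ps ! Suc i) ((s - ?a) / (?b - ?a)) = linepath (ps ! i) (ps ! Suc i) ((t - ?a) / (?b - ?a))"
    using assms polypath_edge[of ps i s] polypath_edge[of ps i t] by auto
  ultimately have "(s - ?a) / (?b - ?a) = (t - ?a) / (?b - ?a)"
    using inj_on_linepath[OF assms(3)] by (auto dest: inj_onD)
  then show ?thesis using lt by (simp add: divide_simps)
qed

lemma vt_cover: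
  assumes "m \<ge> 2" "0 \<le> t" "t < 1"
  shows "\<exists>i. Suc i < m \<and> vt m i \<le> t \<and> t < vt m (Suc i)"
proof -
  have "\<forall>k. k < m \<longrightarrow> vt m k > t \<longrightarrow> (\<exists>i. i < k \<and> vt m i \<le> t \<and> t < vt m (Suc i))"
  proof (intro allI)
    fix k show "k < m \<longrightarrow> vt m k > t \<longrightarrow> (\<exists>i. i < k \<and> vt m i \<le> t \<and> t < vt m (Suc i))"
    proof (induction k)
      case 0 then show ?case using assms by simp
    next
      case (Suc k)
      then show ?case by (cases "vt m k \<le> t") (auto intro: less_SucI)
    qed
  qed
  moreover have "m - 1 < m" "vt m (m - 1) > t" using assms vt_last[of m] by auto
  ultimately obtain i where "i < m - 1" "vt m i \<le> t" "t < vt m (Suc i)" by blast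
  then show ?thesis by (intro exI[of _ i]) auto
qed




lemma sorted_filter': "sorted xs \<Longrightarrow> sorted (filter P xs)"
  using sorted_wrt_filter by blast

lemma nonsimple_W:
  assumes n2: "length qs \<ge> 2" and dq: "distinct qs"
    and ns: "\<not> simple_path (closed_polypath qs)"
  shows "\<exists>z A B. (\<exists>x\<in>set A. x \<noteq> z) \<and> (\<exists>x\<in>set B. x \<noteq> z) \<and>
           set qs \<subseteq> set (z # A @ z # B) \<and> cper (z # A @ z # B) \<le> cper qs"
proof -
  define n where "n = length qs"
  define ps where "ps = qs @ [hd qs]"
  define m where "m = length ps"
  define g where "g = polypath ps"
  define tt where "tt = vt m"
  have m: "m = Suc n" "m \<ge> 3" using n2 unfolding m_def ps_def n_def by auto
  have qne: "qs \<noteq> []" using n2 by auto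
  have psn: "\<And>i. i < n \<Longrightarrow> ps ! i = qs ! i" unfolding ps_def n_def by (simp add: nth_append)
  have psn2: "ps ! n = hd qs" unfolding ps_def n_def by simp
  have hdq: "hd qs = qs ! 0" using qne by (simp add: hd_conv_nth)
  have gv: "\<And>i. i < m \<Longrightarrow> g (tt i) = ps ! i"
    unfolding g_def tt_def m_def using m by (intro polypath_vertex) (auto simp: m_def)
  have tt0: "tt 0 = 0" by (simp add: tt_def)
  have ttn: "tt n = 1" unfolding tt_def using vt_last[of m] m by simp
  have ttmono: "\<And>i j. i \<le> j \<Longrightarrow> j < m \<Longrightarrow> tt i \<le> tt j"
    unfolding tt_def using vt_mono m by simp
  have ttb: "\<And>i. 0 \<le> tt i \<and> tt i \<le> 1" unfolding tt_def by (rule vt_bounds)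
  have g0: "g 0 = hd qs" using gv[of 0] tt0 m psn[of 0] hdq by simp
  have g1: "g 1 = hd qs" using gv[of n] ttn m psn2 by simp
  have cons: "\<And>i. i < n \<Longrightarrow> ps ! i \<noteq> ps ! Suc i"
  proof -
    fix i assume i: "i < n"
    show "ps ! i \<noteq> ps ! Suc i"
    proof (cases "Suc i < n")
      case True
      then show ?thesis using psn i dq unfolding n_def by (simp add: nth_eq_iff_index_eq)
    next
      case False
      then have "Suc i = n" using i by simp
      moreover have "i \<noteq> 0" using n2 calculation unfolding n_def by simp
      moreover have "qs ! i \<noteq> qs ! 0" using nth_eq_iff_index_eq[OF dq, of i 0] \<open>i \<noteq> 0\<close> i qne
        unfolding n_def by auto
      ultimately show ?thesis using psn[OF i] psn2 hdq by simp
    qed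
  qed
  have inj: "\<And>i s t. i < n \<Longrightarrow> s \<in> {tt i .. tt (Suc i)} \<Longrightarrow> t \<in> {tt i .. tt (Suc i)} \<Longrightarrow> g s = g t \<Longrightarrow> s = t"
    unfolding g_def tt_def
    by (rule polypath_edge_inj) (use m cons in \<open>auto simp: m_def\<close>)
  have gcl: "g = closed_polypath qs" unfolding g_def ps_def closed_polypath_def by simp
  have pg: "path g" unfolding g_def by (rule path_polypath)
  obtain x y where xy: "0 \<le> x" "x < y" "y < 1" "g x = g y"
  proof -
    from ns pg have "\<not> loop_free g" unfolding gcl simple_path_def by simp
    then obtain a b where ab: "a \<in> {0..1}" "b \<in> {0..1}" "g a = g b" "a \<noteq> b"
      "\<not> (a = 0 \<and> b = 1)" "\<not> (a = 1 \<and> b = 0)"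
      unfolding loop_free_def by blast
    define x0 where "x0 = min a b"
    define y0 where "y0 = max a b"
    have "0 \<le> x0" "x0 < y0" "y0 \<le> 1" "g x0 = g y0" "\<not> (x0 = 0 \<and> y0 = 1)"
      using ab unfolding x0_def y0_def by (auto simp: min_def max_def)
    show ?thesis
    proof (cases "y0 = 1")
      case False
      then show ?thesis using that \<open>0 \<le> x0\<close> \<open>x0 < y0\<close> \<open>y0 \<le> 1\<close> \<open>g x0 = g y0\<close> by auto
    next
      case True
      then have "0 < x0" "x0 < 1" "g 0 = g x0"
        using \<open>0 \<le> x0\<close> \<open>x0 < y0\<close> \<open>g x0 = g y0\<close> \<open>\<not> (x0 = 0 \<and> y0 = 1)\<close> g0 g1 by auto
      then show ?thesis using that[of 0 x0] by auto
    qed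
  qed
  define z where "z = g x"
  define T0 where "T0 = map tt [0..<n]"
  define F0 where "F0 = filter (\<lambda>t. t < x) T0"
  define FA where "FA = filter (\<lambda>t. x < t \<and> t < y) T0"
  define F1 where "F1 = filter (\<lambda>t. y < t) T0"
  define A where "A = map g FA"
  define B where "B = map g F1 @ map g F0"
  have sT0: "sorted T0" unfolding T0_def sorted_iff_nth_mono using ttmono m by auto
  have T0set: "set T0 \<subseteq> {0..1}" unfolding T0_def using ttb by auto
  have T0mem: "\<And>i. i < n \<Longrightarrow> tt i \<in> set T0" unfolding T0_def by auto
  have qs_eq: "map g T0 = qs"
    unfolding T0_def by (rule nth_equalityI) (use gv psn m in \<open>auto simp: n_def\<close>)
  have ndA: "\<exists>w\<in>set A. w \<noteq> z"
  proof -
    obtain i where i: "Suc i < m" "tt i \<le> x" "x < tt (Suc i)"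
      using vt_cover[of m x] m xy unfolding tt_def by auto
    have "tt (Suc i) < y"
    proof (rule ccontr)
      assume "\<not> tt (Suc i) < y"
      then have "x = y" using inj[of i x y] i xy m by auto
      then show False using xy by simp
    qed
    have "Suc i < n"
    proof (rule ccontr)
      assume "\<not> Suc i < n" then have "Suc i = n" using i m by simp
      then show False using \<open>tt (Suc i) < y\<close> ttn xy by simp
    qed
    have mem: "g (tt (Suc i)) \<in> set A"
      unfolding A_def FA_def using T0mem[OF \<open>Suc i < n\<close>] i \<open>tt (Suc i) < y\<close> by auto
    have "g (tt (Suc i)) \<noteq> z"
    proof
      assume "g (tt (Suc i)) = z"
      then have "tt (Suc i) = x" using inj[of i "tt (Suc i)" x] i m ttmono[of i "Suc i"]
        unfolding z_def by auto
      then show False using i by simp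
    qed
    then show ?thesis using mem by blast
  qed
  have ndB: "\<exists>w\<in>set B. w \<noteq> z"
  proof -
    obtain j where j: "Suc j < m" "tt j \<le> y" "y < tt (Suc j)"
      using vt_cover[of m y] m xy unfolding tt_def by auto
    show ?thesis
    proof (cases "Suc j < n")
      case True
      have mem: "g (tt (Suc j)) \<in> set B"
        unfolding B_def F1_def using T0mem[OF True] j by auto
      have "g (tt (Suc j)) \<noteq> z"
      proof
        assume "g (tt (Suc j)) = z"
        then have "tt (Suc j) = y" using inj[of j "tt (Suc j)" y] j m ttmono[of j "Suc j"] xy
          unfolding z_def by auto
        then show False using j by simp
      qed
      then show ?thesis using mem by blast
    next
      case False
      then have sj: "Suc j = n" using j m by simp
      have "hd qs \<noteq> z"
      proof
        assume "hd qs = z"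
        then have "g 1 = g y" using g1 xy unfolding z_def by simp
        then have "1 = y" using inj[of j 1 y] j sj ttn xy by auto
        then show False using xy by simp
      qed
      then have "x \<noteq> 0" using g0 unfolding z_def by auto
      then have "0 \<in> set F0" unfolding F0_def using T0mem[of 0] tt0 xy m by auto
      then have "hd qs \<in> set B" using g0 unfolding B_def by force
      then show ?thesis using \<open>hd qs \<noteq> z\<close> by blast
    qed
  qed
  have cov: "set qs \<subseteq> set (z # A @ z # B)"
  proof
    fix q assume "q \<in> set qs"
    then obtain t where t: "t \<in> set T0" "q = g t" using qs_eq by (metis imageE set_map)
    consider "t < x" | "t = x" | "x < t \<and> t < y" | "t = y" | "y < t" by linarith
    then show "q \<in> set (z # A @ z # B)"
    proof cases
      case 1 then show ?thesis using t unfolding B_def F0_def by auto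
    next
      case 2 then show ?thesis using t unfolding z_def by auto
    next
      case 3 then show ?thesis using t unfolding A_def FA_def by auto
    next
      case 4 then show ?thesis using t xy unfolding z_def by auto
    next
      case 5 then show ?thesis using t unfolding B_def F1_def by auto
    qed
  qed
  define S where "S = F0 @ [x] @ FA @ [y] @ F1 @ [1]"
  have sS: "sorted S" "set S \<subseteq> {0..1}"
    unfolding S_def F0_def FA_def F1_def
    using sT0 T0set xy by (auto simp: sorted_append intro: sorted_filter')
  have "osum (map g S) \<le> osum ps"
    using SB_polypath[of ps] sS unfolding SB_def g_def by blast
  moreover have "osum ps = cper qs" unfolding ps_def cper_def by simp
  moreover have "osum (map g S) = cper (z # A @ z # B)"
  proof -
    define L where "L = map g F0 @ z # A @ z # map g F1"
    have hdL: "hd L = hd qs"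
    proof (cases "F0 = []")
      case True
      then have "\<not> 0 < x" unfolding F0_def using T0mem[of 0] tt0 m by (auto simp: filter_empty_conv)
      then have "x = 0" using xy by simp
      then show ?thesis using True g0 unfolding L_def z_def by simp
    next
      case False
      then have "0 < x" unfolding F0_def using T0set by (auto simp: filter_empty_conv)
      have "T0 = 0 # tl T0" unfolding T0_def using m tt0
        by (simp add: upt_conv_Cons)
      then have "hd F0 = 0" unfolding F0_def using \<open>0 < x\<close> by (metis filter.simps(2) list.sel(1))
      then show ?thesis using False g0 unfolding L_def by (simp add: hd_map)
    qed
    have "map g S = L @ [g 1]"
      unfolding S_def L_def A_def z_def using xy by simp
    then have "map g S = L @ [hd L]" using hdL g1 by simp
    then have "osum (map g S) = cper L" unfolding cper_def by simp
    also have "\<dots> = cper ((z # A @ z # map g F1) @ map g F0)"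
      unfolding L_def using cper_rotate[of "map g F0" "z # A @ z # map g F1"] by simp
    also have "\<dots> = cper (z # A @ z # B)" unfolding B_def by simp
    finally show ?thesis .
  qed
  ultimately have "cper (z # A @ z # B) \<le> cper qs" by simp
  then show ?thesis using ndA ndB cov by blast
qed




lemma sum_osum: "(\<Sum>i < length xs - 1. dist (xs ! i) (xs ! Suc i)) = osum xs"
proof (induction xs rule: osum.induct)
  case (1 a b xs)
  have "(\<Sum>i < length (a # b # xs) - 1. dist ((a # b # xs) ! i) ((a # b # xs) ! Suc i))
      = (\<Sum>i < Suc (length (b # xs) - 1). dist ((a # b # xs) ! i) ((a # b # xs) ! Suc i))"
    by simp
  also have "\<dots> = dist a b + (\<Sum>i < length (b # xs) - 1. dist ((b # xs) ! i) ((b # xs) ! Suc i))"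
    by (subst sum.lessThan_Suc_shift) simp
  finally show ?case using 1 by simp
qed auto

lemma sum_osum_map: "(\<Sum>i < length ts - 1. dist (g (ts ! i)) (g (ts ! Suc i))) = osum (map g ts)"
proof -
  have "(\<Sum>i < length ts - 1. dist (g (ts ! i)) (g (ts ! Suc i)))
      = (\<Sum>i < length (map g ts) - 1. dist (map g ts ! i) (map g ts ! Suc i))"
    by (intro sum.cong) auto
  also have "\<dots> = osum (map g ts)" by (rule sum_osum)
  finally show ?thesis .
qed

lemma sorted_bounds: "sorted ts \<Longrightarrow> ts \<noteq> [] \<Longrightarrow> x \<in> set ts \<Longrightarrow> hd ts \<le> x \<and> x \<le> last (ts::real list)"
proof -
  assume s: "sorted ts" "ts \<noteq> []" "x \<in> set ts"
  have "hd ts \<le> x" using s by (cases ts) auto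
  moreover have "x \<le> last ts"
  proof -
    have e: "ts = butlast ts @ [last ts]" using s by simp
    then have "sorted (butlast ts @ [last ts])" using s by simp
    then have "\<forall>y\<in>set (butlast ts). y \<le> last ts" by (simp add: sorted_append)
    moreover have "x \<in> set (butlast ts) \<or> x = last ts" using s(3) e
      by (metis Un_iff empty_iff empty_set set_append set_simps(2) insert_iff)
    ultimately show ?thesis by auto
  qed
  ultimately show ?thesis by simp
qed

lemma curve_length_polypath: "curve_length (polypath ps) \<le> ereal (osum ps)"
  unfolding curve_length_def
proof (rule SUP_least)
  fix ts :: "real list" assume "ts \<in> {ts. sorted ts \<and> ts \<noteq> [] \<and> hd ts = 0 \<and> last ts = 1}"
  then have s: "sorted ts" "ts \<noteq> []" "hd ts = 0" "last ts = 1" by auto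
  have "set ts \<subseteq> {0..1}" using sorted_bounds[OF s(1,2)] s(3,4) by auto
  then have "osum (map (polypath ps) ts) \<le> osum ps" using SB_polypath[of ps] s unfolding SB_def by blast
  then show "ereal (\<Sum>i < length ts - 1. dist (polypath ps (ts ! i)) (polypath ps (ts ! Suc i))) \<le> ereal (osum ps)"
    unfolding sum_osum_map by simp
qed

lemma curve_length_lower:
  assumes "pathfinish g = pathstart g" "sorted ts" "ts \<noteq> []" "set ts \<subseteq> {0..1}"
  shows "ereal (cper (map g ts)) \<le> curve_length g"
proof -
  define ls where "ls = 0 # ts @ [1]"
  have ls: "ls \<in> {ts. sorted ts \<and> ts \<noteq> [] \<and> hd ts = 0 \<and> last ts = 1}"
    using assms unfolding ls_def by (auto simp: sorted_append)
  have g01: "g 0 = g 1" using assms(1) by (simp add: pathfinish_def pathstart_def)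
  have "osum (map g ls) = dist (g 0) (g (hd ts)) + osum (map g ts) + dist (g (last ts)) (g 1)"
    unfolding ls_def using assms(3) osum_append[of "map g ts" "[g 1]"]
    by (simp add: osum_Cons hd_map last_map)
  moreover have "cper (map g ts) = osum (map g ts) + dist (g (last ts)) (g (hd ts))"
    using assms(3) by (simp add: cper_alt hd_map last_map)
  moreover have "dist (g (last ts)) (g (hd ts)) \<le> dist (g (last ts)) (g 1) + dist (g 0) (g (hd ts))"
    using g01 dist_triangle[of "g (last ts)" "g (hd ts)" "g 1"] by (simp add: dist_commute)
  ultimately have "cper (map g ts) \<le> osum (map g ls)" by simp
  also have "ereal (osum (map g ls)) \<le> curve_length g"
    unfolding curve_length_def sum_osum_map[symmetric]
    by (rule SUP_upper[OF ls])
  finally show ?thesis by simp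
qed

lemma ins_mid: "U \<noteq> [] \<Longrightarrow> V \<noteq> [] \<Longrightarrow> cper (U @ p # V) \<le> cper (U @ V) \<Longrightarrow> p \<in> closed_segment (last U) (hd V)"
  by (intro seg_of_dist) (simp add: cper_alt osum_append osum_Cons)

lemma ins_front: "V \<noteq> [] \<Longrightarrow> cper (p # V) \<le> cper V \<Longrightarrow> p \<in> closed_segment (last V) (hd V)"
  by (intro seg_of_dist) (simp add: cper_alt osum_Cons dist_commute)

lemma image_closed_polypath: "qs \<noteq> [] \<Longrightarrow>
  path_image (closed_polypath qs) = (\<Union>i<length qs. closed_segment ((qs @ [hd qs]) ! i) ((qs @ [hd qs]) ! Suc i))"
  unfolding closed_polypath_def by (subst image_polypath) (auto simp: Suc_le_eq)

lemma edge_mid_sub: "U \<noteq> [] \<Longrightarrow> V \<noteq> [] \<Longrightarrow> closed_segment (last U) (hd V) \<subseteq> path_image (closed_polypath (U @ V))"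
proof -
  assume ne: "U \<noteq> []" "V \<noteq> []"
  define k where "k = length U - 1"
  have "(U @ V @ [hd (U @ V)]) ! k = last U" "(U @ V @ [hd (U @ V)]) ! Suc k = hd V"
    using ne unfolding k_def by (auto simp: nth_append last_conv_nth hd_conv_nth)
  moreover have "k < length (U @ V)" using ne unfolding k_def by (cases U) auto
  ultimately have "closed_segment (last U) (hd V) \<subseteq> (\<Union>i<length (U @ V).
      closed_segment (((U @ V) @ [hd (U @ V)]) ! i) (((U @ V) @ [hd (U @ V)]) ! Suc i))"
    by (auto intro!: bexI[of _ k])
  then show ?thesis using image_closed_polypath[of "U @ V"] ne by simp
qed

lemma edge_wrap_sub: "qs \<noteq> [] \<Longrightarrow> closed_segment (last qs) (hd qs) \<subseteq> path_image (closed_polypath qs)"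
proof -
  assume ne: "qs \<noteq> []"
  define k where "k = length qs - 1"
  have "(qs @ [hd qs]) ! k = last qs" "(qs @ [hd qs]) ! Suc k = hd qs"
    using ne unfolding k_def by (auto simp: nth_append last_conv_nth)
  moreover have "k < length qs" using ne unfolding k_def by simp
  ultimately have "closed_segment (last qs) (hd qs) \<subseteq> (\<Union>i<length qs.
      closed_segment ((qs @ [hd qs]) ! i) ((qs @ [hd qs]) ! Suc i))"
    by (auto intro!: bexI[of _ k])
  then show ?thesis using image_closed_polypath[of qs] ne by simp
qed

lemma vertex_in_image: "x \<in> set qs \<Longrightarrow> x \<in> path_image (closed_polypath qs)"
proof -
  assume x: "x \<in> set qs"
  then obtain k where k: "k < length qs" "qs ! k = x" by (auto simp: in_set_conv_nth)
  have "(qs @ [hd qs]) ! k = x" using k by (simp add: nth_append)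
  then have "x \<in> closed_segment ((qs @ [hd qs]) ! k) ((qs @ [hd qs]) ! Suc k)" by simp
  then show ?thesis using k x by (subst image_closed_polypath) auto
qed

lemma connected_fill_segment:
  fixes a b :: "real^2"
  assumes "connected C" "C \<subseteq> closed_segment a b" "a \<in> C" "b \<in> C"
  shows "closed_segment a b \<subseteq> C"
proof
  fix c assume c: "c \<in> closed_segment a b"
  then obtain u where u: "0 \<le> u" "u \<le> 1" "c = (1 - u) *\<^sub>R a + u *\<^sub>R b" by (auto simp: in_segment)
  let ?d = "b - a"
  have cd: "c = a + u *\<^sub>R ?d" using u(3) by (simp add: algebra_simps)
  have ia: "inner ?d a \<le> inner ?d c" and ic: "inner ?d c \<le> inner ?d b"
  proof -
    have "inner ?d c = inner ?d a + u * inner ?d ?d"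
      unfolding cd by (simp only: inner_add_right inner_scaleR_right)
    moreover have "inner ?d b = inner ?d a + inner ?d ?d"
    proof -
      have "inner ?d b = inner ?d (a + ?d)" by simp
      then show ?thesis by (simp only: inner_add_right)
    qed
    moreover have "0 \<le> inner ?d ?d" by simp
    ultimately show "inner ?d a \<le> inner ?d c" "inner ?d c \<le> inner ?d b"
      using u by (auto intro: mult_left_le_one_le)
  qed
  obtain p where p: "p \<in> C" "inner ?d p = inner ?d c"
    using connected_ivt_hyperplane[OF assms(1,3,4) ia ic] by blast
  have "p \<in> closed_segment a b" using p assms(2) by auto
  then obtain v where v: "0 \<le> v" "v \<le> 1" "p = (1 - v) *\<^sub>R a + v *\<^sub>R b" by (auto simp: in_segment)
  show "c \<in> C"
  proof (cases "a = b")
    case True then show ?thesis using c assms(3) by simp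
  next
    case False
    then have dd: "inner ?d ?d > 0" by simp
    have pd: "p = a + v *\<^sub>R ?d" using v(3) by (simp add: algebra_simps)
    have "inner ?d p = inner ?d a + v * inner ?d ?d"
      unfolding pd by (simp only: inner_add_right inner_scaleR_right)
    moreover have "inner ?d c = inner ?d a + u * inner ?d ?d"
      unfolding cd by (simp only: inner_add_right inner_scaleR_right)
    ultimately have "v = u" using p(2) dd by simp
    then show ?thesis using p u v by simp
  qed
qed

lemma collinear_extremes:
  fixes S :: "(real^2) set"
  assumes "collinear S" "finite S" "S \<noteq> {}"
  shows "\<exists>a\<in>S. \<exists>b\<in>S. S \<subseteq> closed_segment a b"
proof -
  obtain u v where uv: "\<And>x. x \<in> S \<Longrightarrow> \<exists>c. x = u + c *\<^sub>R v"
    using assms(1) unfolding collinear_alt by blast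
  define f where "f x = inner (x - u) v" for x
  have "Min (f ` S) \<in> f ` S" using assms by (intro Min_in) auto
  then obtain a where a: "a \<in> S" "f a = Min (f ` S)" by auto
  have "Max (f ` S) \<in> f ` S" using assms by (intro Max_in) auto
  then obtain b where b: "b \<in> S" "f b = Max (f ` S)" by auto
  have fa: "\<And>x. x \<in> S \<Longrightarrow> f a \<le> f x" using a assms by simp
  have fb: "\<And>x. x \<in> S \<Longrightarrow> f x \<le> f b" using b assms by simp
  have "S \<subseteq> closed_segment a b"
  proof
    fix x assume x: "x \<in> S"
    obtain cx where cx: "x = u + cx *\<^sub>R v" using uv[OF x] by blast
    obtain ca where ca: "a = u + ca *\<^sub>R v" using uv[OF a(1)] by blast
    obtain cb where cb: "b = u + cb *\<^sub>R v" using uv[OF b(1)] by blast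
    show "x \<in> closed_segment a b"
    proof (cases "v = 0")
      case True then show ?thesis using cx ca by simp
    next
      case False
      then have vv: "inner v v > 0" by simp
      have "f x = cx * inner v v" "f a = ca * inner v v" "f b = cb * inner v v"
        using cx ca cb unfolding f_def by simp_all
      then have le: "ca \<le> cx" "cx \<le> cb" using fa[OF x] fb[OF x] vv by simp_all
      show ?thesis
      proof (cases "ca = cb")
        case True then have "x = a" using le cx ca by simp
        then show ?thesis by simp
      next
        case False
        define w where "w = (cx - ca) / (cb - ca)"
        have w: "0 \<le> w" "w \<le> 1" using le False unfolding w_def by (auto simp: divide_simps)
        have "x = (1 - w) *\<^sub>R a + w *\<^sub>R b"
        proof -
          have "(1 - w) *\<^sub>R a + w *\<^sub>R b = u + (ca + w * (cb - ca)) *\<^sub>R v"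
            using ca cb by (simp add: algebra_simps)
          also have "ca + w * (cb - ca) = cx" using False unfolding w_def by (simp add: divide_simps)
          finally show ?thesis using cx by simp
        qed
        then show ?thesis using w by (auto simp: in_segment)
      qed
    qed
  qed
  then show ?thesis using a(1) b(1) by blast
qed




lemma sorted_insert_mid:
  fixes U V :: "real list"
  assumes "sorted (U @ V)" "U \<noteq> []" "V \<noteq> []" "last U \<le> s" "s \<le> hd V"
  shows "sorted (U @ s # V)"
proof -
  have sU: "sorted U" and sV: "sorted V" using assms(1) by (auto simp: sorted_append)
  have "\<forall>u\<in>set U. u \<le> s" using sorted_bounds[OF sU assms(2)] assms(4) by force
  moreover have "\<forall>v\<in>set V. s \<le> v" using sorted_bounds[OF sV assms(3)] assms(5) by force
  ultimately show ?thesis using assms(1) by (auto simp: sorted_append)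
qed

lemma closed_polypath_tour:
  assumes "r \<noteq> []" "\<forall>i<n. \<exists>x\<in>set r. x \<in> P i"
  shows "is_tour n P (closed_polypath r)"
  unfolding is_tour_def
proof (intro conjI)
  show "path (closed_polypath r)" unfolding closed_polypath_def by (rule path_polypath)
  show "pathfinish (closed_polypath r) = pathstart (closed_polypath r)"
    unfolding closed_polypath_def using assms(1) by (simp add: polypath_start polypath_finish)
  show "\<forall>i<n. path_image (closed_polypath r) \<inter> P i \<noteq> {}"
    using assms(2) vertex_in_image by blast
qed

theorem lemma2p1:
  fixes n :: nat and P :: "nat \<Rightarrow> (real^2) set" and \<alpha> :: real and T :: "real \<Rightarrow> real^2"
  assumes "n \<ge> 1"
    and "\<alpha> > 0"
    and "\<And>i. i < n \<Longrightarrow> simple_polygon (P i)"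
    and "\<And>i. i < n \<Longrightarrow> connected (P i)"
    and "\<And>i. i < n \<Longrightarrow> fat \<alpha> (P i)"
    and "\<And>i j. i < n \<Longrightarrow> j < n \<Longrightarrow> i \<noteq> j \<Longrightarrow> P i \<inter> P j = {}"
    and "optimal_tour n P T"
  shows "\<exists>vs. 1 \<le> length vs \<and> length vs \<le> n \<and>
           path_image T = path_image (closed_polypath vs) \<and>
           (length vs \<ge> 3 \<longrightarrow> simple_polygon_curve vs)"
proof -
  from assms(7) have tour: "is_tour n P T" and opt: "\<And>h. is_tour n P h \<Longrightarrow> curve_length T \<le> curve_length h"
    unfolding optimal_tour_def by auto
  from tour have pT: "path T" and cT: "pathfinish T = pathstart T"
    and vis: "\<And>i. i < n \<Longrightarrow> path_image T \<inter> P i \<noteq> {}" unfolding is_tour_def by auto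
  have ex: "\<And>i. i < n \<Longrightarrow> \<exists>s. s \<in> {0..1} \<and> T s \<in> P i"
    using vis unfolding path_image_def by blast
  define sf where "sf i = (SOME s. s \<in> {0..1} \<and> T s \<in> P i)" for i
  have sf: "\<And>i. i < n \<Longrightarrow> sf i \<in> {0..1} \<and> T (sf i) \<in> P i"
    unfolding sf_def using ex by (rule someI_ex)
  have injT: "\<And>i j. i < n \<Longrightarrow> j < n \<Longrightarrow> T (sf i) = T (sf j) \<Longrightarrow> i = j"
  proof (rule ccontr)
    fix i j assume ij: "i < n" "j < n" "T (sf i) = T (sf j)" "i \<noteq> j"
    then have "P i \<inter> P j = {}" using assms(6) by blast
    moreover have "T (sf i) \<in> P i" "T (sf j) \<in> P j" using sf[OF ij(1)] sf[OF ij(2)] by auto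
    ultimately show False using ij(3) by auto
  qed
  define ts where "ts = sorted_list_of_set (sf ` {..<n})"
  have injsf: "inj_on sf {..<n}" using injT unfolding inj_on_def by auto
  have setts: "set ts = sf ` {..<n}" unfolding ts_def by simp
  have sts: "sorted ts" and dts: "distinct ts" unfolding ts_def by simp_all
  have lts: "length ts = n" unfolding ts_def using card_image[OF injsf] by simp
  have tsI: "set ts \<subseteq> {0..1}" using setts sf by auto
  define qs where "qs = map T ts"
  have lq: "length qs = n" unfolding qs_def using lts by simp
  have qne: "qs \<noteq> []" using lq assms(1) by auto
  have tne: "ts \<noteq> []" using lts assms(1) by auto
  have dq: "distinct qs"
  proof -
    have "inj_on T (set ts)" unfolding inj_on_def setts using injT by auto
    then show ?thesis unfolding qs_def using dts by (simp add: distinct_map)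
  qed
  have cover: "\<And>i. i < n \<Longrightarrow> T (sf i) \<in> set qs" unfolding qs_def using setts by auto
  have U: "\<And>r. set qs \<subseteq> set r \<Longrightarrow> curve_length T \<le> ereal (cper r)"
  proof -
    fix r assume r: "set qs \<subseteq> set r"
    then have rne: "r \<noteq> []" using qne by auto
    have "is_tour n P (closed_polypath r)"
      by (rule closed_polypath_tour[OF rne]) (use r cover sf in blast)
    then have "curve_length T \<le> curve_length (closed_polypath r)" by (rule opt)
    also have "\<dots> \<le> ereal (cper r)"
      unfolding closed_polypath_def cper_def by (rule curve_length_polypath)
    finally show "curve_length T \<le> ereal (cper r)" .
  qed
  have Lo: "\<And>ts'. sorted ts' \<Longrightarrow> ts' \<noteq> [] \<Longrightarrow> set ts' \<subseteq> {0..1} \<Longrightarrow> ereal (cper (map T ts')) \<le> curve_length T"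
    by (rule curve_length_lower[OF cT])
  have Lq: "curve_length T = ereal (cper qs)"
    using U[of qs] Lo[OF sts tne tsI] unfolding qs_def by simp
  have OPT: "cper qs \<le> cper r" if r: "set qs \<subseteq> set r" for r
  proof -
    have "ereal (cper qs) \<le> ereal (cper r)" using U[OF r] Lq by simp
    then show ?thesis by simp
  qed
  have INS: "cper (map T ts') \<le> cper qs" if t: "sorted ts'" "ts' \<noteq> []" "set ts' \<subseteq> {0..1}" for ts'
  proof -
    have "ereal (cper (map T ts')) \<le> ereal (cper qs)" using Lo[OF t] Lq by simp
    then show ?thesis by simp
  qed
  have contT: "continuous_on {0..1} T" using pT unfolding path_def .
  have sub1: "path_image T \<subseteq> path_image (closed_polypath qs)"
  proof
    fix p assume "p \<in> path_image T"
    then obtain s where s: "s \<in> {0..1}" "p = T s" unfolding path_image_def by auto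
    define ts1 where "ts1 = filter (\<lambda>t. t \<le> s) ts"
    define ts2 where "ts2 = filter (\<lambda>t. \<not> t \<le> s) ts"
    have tsp: "ts = ts1 @ ts2" unfolding ts1_def ts2_def by (rule sorted_split[OF sts])
    have ss: "sorted (ts1 @ s # ts2)"
      using sts unfolding ts1_def ts2_def by (auto simp: sorted_append intro: sorted_filter')
    have "set (ts1 @ s # ts2) \<subseteq> {0..1}" using tsI s tsp by auto
    then have c: "cper (map T ts1 @ p # map T ts2) \<le> cper (map T ts1 @ map T ts2)"
      using INS[OF ss] s tsp unfolding qs_def by simp
    have qsp: "qs = map T ts1 @ map T ts2" unfolding qs_def using tsp by simp
    show "p \<in> path_image (closed_polypath qs)"
    proof (cases "ts1 = []")
      case True
      then have "cper (p # qs) \<le> cper qs" using c qsp by simp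
      then show ?thesis using ins_front[OF qne] edge_wrap_sub[OF qne] by blast
    next
      case F1: False
      show ?thesis
      proof (cases "ts2 = []")
        case True
        then have "cper ([p] @ qs) \<le> cper qs" using c qsp cper_rotate[of qs "[p]"] by simp
        then show ?thesis using ins_front[OF qne] edge_wrap_sub[OF qne] by simp blast
      next
        case False
        then have "p \<in> closed_segment (last (map T ts1)) (hd (map T ts2))"
          using ins_mid[OF _ _ c] F1 by simp
        then show ?thesis using edge_mid_sub[of "map T ts1" "map T ts2"] F1 False qsp by auto
      qed
    qed
  qed
  have sub2: "path_image (closed_polypath qs) \<subseteq> path_image T"
  proof -
    have "closed_segment ((qs @ [hd qs]) ! i) ((qs @ [hd qs]) ! Suc i) \<subseteq> path_image T" if i: "i < n" for i
    proof (cases "Suc i < n")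
      case True
      define U where "U = take (Suc i) ts"
      define V where "V = drop (Suc i) ts"
      have UV: "ts = U @ V" "U \<noteq> []" "V \<noteq> []" using True lts unfolding U_def V_def by auto
      have lU: "last U = ts ! i" using True lts unfolding U_def by (simp add: take_Suc_conv_app_nth)
      have hV: "hd V = ts ! Suc i" using True lts unfolding V_def by (simp add: hd_drop_conv_nth)
      have e1: "(qs @ [hd qs]) ! i = T (ts ! i)" "(qs @ [hd qs]) ! Suc i = T (ts ! Suc i)"
        using True lts lq unfolding qs_def by (simp_all add: nth_append)
      define C where "C = T ` {ts ! i .. ts ! Suc i}"
      have "ts ! i \<in> set ts" "ts ! Suc i \<in> set ts" using True lts by auto
      then have ab: "ts ! i \<in> {0..1}" "ts ! Suc i \<in> {0..1}" using tsI by auto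
      have Csub: "C \<subseteq> closed_segment (T (ts ! i)) (T (ts ! Suc i))"
      proof
        fix p assume "p \<in> C"
        then obtain s where s: "s \<in> {ts ! i .. ts ! Suc i}" "p = T s" unfolding C_def by auto
        have ss: "sorted (U @ s # V)" using sorted_insert_mid[of U V s] UV sts lU hV s by simp
        have "set (U @ s # V) \<subseteq> {0..1}" using tsI UV s ab by auto
        then have "cper (map T U @ p # map T V) \<le> cper (map T U @ map T V)"
          using INS[OF ss] s UV unfolding qs_def by simp
        then have "p \<in> closed_segment (last (map T U)) (hd (map T V))"
          using ins_mid UV by simp
        then show "p \<in> closed_segment (T (ts ! i)) (T (ts ! Suc i))" using lU hV UV by (simp add: last_map hd_map)
      qed
      have le: "ts ! i \<le> ts ! Suc i" using sts True lts by (simp add: sorted_iff_nth_mono)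
      have "connected C" unfolding C_def
        by (rule connected_continuous_image[OF continuous_on_subset[OF contT]]) (use ab in auto)
      moreover have "T (ts ! i) \<in> C" "T (ts ! Suc i) \<in> C" unfolding C_def using le by auto
      ultimately have "closed_segment (T (ts ! i)) (T (ts ! Suc i)) \<subseteq> C"
        using connected_fill_segment Csub by blast
      moreover have "C \<subseteq> path_image T" unfolding C_def path_image_def using ab by auto
      ultimately show ?thesis using e1 by simp
    next
      case False
      then have iN: "Suc i = n" using i by simp
      have ii: "i = n - Suc 0" using iN by simp
      have e1: "(qs @ [hd qs]) ! i = T (last ts)" "(qs @ [hd qs]) ! Suc i = T (hd ts)"
        using iN lts lq tne unfolding qs_def by (simp_all add: nth_append last_conv_nth hd_map ii)
      have lq': "last qs = T (last ts)" "hd qs = T (hd ts)" unfolding qs_def using tne by (simp_all add: last_map hd_map)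
      have ab: "last ts \<in> {0..1}" "hd ts \<in> {0..1}" using tsI last_in_set[OF tne] hd_in_set[OF tne] by auto
      define C where "C = T ` {last ts .. 1} \<union> T ` {0 .. hd ts}"
      have Csub: "C \<subseteq> closed_segment (T (last ts)) (T (hd ts))"
      proof
        fix p assume "p \<in> C"
        then consider s where "s \<in> {last ts .. 1}" "p = T s" | s where "s \<in> {0 .. hd ts}" "p = T s"
          unfolding C_def by auto
        then have "cper (p # qs) \<le> cper qs"
        proof cases
          case (1 s)
          have "\<forall>x\<in>set ts. x \<le> s"
          proof
            fix x assume "x \<in> set ts" then have "x \<le> last ts" using sorted_bounds[OF sts tne] by blast
            then show "x \<le> s" using 1 by simp
          qed
          then have ss: "sorted (ts @ [s])" using sts by (simp add: sorted_append)
          have "set (ts @ [s]) \<subseteq> {0..1}" using tsI 1 ab by auto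
          then have "cper (qs @ [p]) \<le> cper qs" using INS[OF ss] 1 unfolding qs_def by simp
          then show ?thesis using cper_rotate[of qs "[p]"] by simp
        next
          case (2 s)
          have "\<forall>x\<in>set ts. s \<le> x"
          proof
            fix x assume "x \<in> set ts" then have "hd ts \<le> x" using sorted_bounds[OF sts tne] by blast
            then show "s \<le> x" using 2 by simp
          qed
          then have ss: "sorted (s # ts)" using sts by simp
          have "set (s # ts) \<subseteq> {0..1}" using tsI 2 ab by auto
          then show ?thesis using INS[OF ss] 2 unfolding qs_def by simp
        qed
        then show "p \<in> closed_segment (T (last ts)) (T (hd ts))" using ins_front[OF qne] lq' by simp
      qed
      have T01: "T 0 = T 1" using cT by (simp add: pathfinish_def pathstart_def)
      have "connected C" unfolding C_def
      proof (rule connected_Un)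
        show "connected (T ` {last ts..1})"
          by (rule connected_continuous_image[OF continuous_on_subset[OF contT]]) (use ab in auto)
        show "connected (T ` {0..hd ts})"
          by (rule connected_continuous_image[OF continuous_on_subset[OF contT]]) (use ab in auto)
        have "T 1 \<in> T ` {last ts..1}" "T 0 \<in> T ` {0..hd ts}" using ab by auto
        then show "T ` {last ts..1} \<inter> T ` {0..hd ts} \<noteq> {}" using T01 by auto
      qed
      moreover have "T (last ts) \<in> C" "T (hd ts) \<in> C" unfolding C_def using ab by auto
      ultimately have "closed_segment (T (last ts)) (T (hd ts)) \<subseteq> C"
        using connected_fill_segment Csub by blast
      moreover have "C \<subseteq> path_image T" unfolding C_def path_image_def using ab by auto
      ultimately show ?thesis using e1 by simp
    qed
    then show ?thesis using image_closed_polypath[OF qne] lq by auto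
  qed
  have imgeq: "path_image T = path_image (closed_polypath qs)" using sub1 sub2 by blast
  show ?thesis
  proof (cases "n \<le> 2")
    case True
    then show ?thesis using imgeq lq assms(1) by (intro exI[of _ qs]) auto
  next
    case n3: False
    show ?thesis
    proof (cases "collinear (set qs)")
      case True
      obtain a b where ab: "a \<in> set qs" "b \<in> set qs" "set qs \<subseteq> closed_segment a b"
        using collinear_extremes[OF True] qne by auto
      have i1: "path_image (closed_polypath qs) \<subseteq> closed_segment a b"
      proof -
        have "closed_segment ((qs @ [hd qs]) ! i) ((qs @ [hd qs]) ! Suc i) \<subseteq> closed_segment a b"
          if i: "i < length qs" for i
        proof (rule closed_segment_subset)
          show "(qs @ [hd qs]) ! i \<in> closed_segment a b" using i ab(3) by (auto simp: nth_append)
          have "(qs @ [hd qs]) ! Suc i \<in> set qs"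
            using i qne by (cases "Suc i < length qs") (auto simp: nth_append)
          then show "(qs @ [hd qs]) ! Suc i \<in> closed_segment a b" using ab(3) by auto
        qed simp
        then show ?thesis using image_closed_polypath[OF qne] by auto
      qed
      have "closed_segment a b \<subseteq> path_image (closed_polypath qs)"
        by (rule connected_fill_segment[OF _ i1])
          (use ab vertex_in_image in \<open>auto intro: connected_path_image simp: closed_polypath_def path_polypath\<close>)
      then have "path_image (closed_polypath qs) = closed_segment a b" using i1 by blast
      moreover have "path_image (closed_polypath [a, b]) = closed_segment a b"
        using image_closed_polypath[of "[a, b]"] by (auto simp: lessThan_Suc closed_segment_commute)
      ultimately show ?thesis using imgeq n3 by (intro exI[of _ "[a, b]"]) auto
    next
      case ncol: False
      have "simple_path (closed_polypath qs)"
      proof (rule ccontr)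
        assume ns: "\<not> simple_path (closed_polypath qs)"
        obtain z A B where W: "\<exists>x\<in>set A. x \<noteq> z" "\<exists>x\<in>set B. x \<noteq> z"
          "set qs \<subseteq> set (z # A @ z # B)" "cper (z # A @ z # B) \<le> cper qs"
          using nonsimple_W[OF _ dq ns] lq n3 by auto
        have "\<forall>r. set qs \<subseteq> set r \<longrightarrow> cper (z # A @ z # B) \<le> cper r"
          using W(4) OPT by (meson order_trans)
        then have "Good (set qs) z A B" unfolding Good_def using W(1-3) by blast
        then have "collinear (set (z # A @ z # B))" by (rule Good_collinear)
        then have "collinear (set qs)" using W(3) collinear_subset by blast
        then show False using ncol by simp
      qed
      then have "simple_polygon_curve qs" unfolding simple_polygon_curve_def using lq n3 by simp
      then show ?thesis using imgeq lq n3 by (intro exI[of _ qs]) auto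
    qed
  qed
qed


end
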